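(* Let $X$ be a supertropical semiring and $n\in\mathbb{N}$. For any pure monomial $m$ in $x_1,\dots,x_n$, the minimal symmetrization $\mathrm{Minsym}_n(m)$ is, as a function $X^n\to X$, a product of elementary symmetric polynomials $e_1,\dots,e_n$ in $x_1,\dots,x_n$.
   Context: A semiring $(X,+,0,\cdot)$: $(X,+,0)$ commutative monoid, $(X,\cdot)$ semigroup, distributivity, $0$ absorbing. $\nu(x)=x+x$. A supertropical semiring is a unital commutative semiring with $2=4$ (where $n=1+\dots+1$), such that $a+b\in\{a,b\}$ whenever $\nu(a)\ne\nu(b)$, and $a+b=\nu(a)$ whenever $\nu(a)=\nu(b)$. For a pure monomial $m=x_1^{c_1}\cdots x_n^{c_n}$ (coefficient $1$), $\mathrm{Minsym}_n(m)$ is the sum, each term taken exactly once, of the distinct monomials in $\{x_{\sigma(1)}^{c_1}\cdots x_{\sigma(n)}^{c_n}:\sigma\in S_n\}$ (monomials equal up to reordering of factors are identified). $e_k(x_1,\dots,x_n)$ is the sum of all products of $k$ distinct variables; the empty product is $1$. *)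

theory Defs
  imports "HOL-Combinatorics.Permutations"
begin

text \<open>A supertropical semiring: a unital commutative semiring (0 absorbing; 0 = 1 not excluded)
  with 2 = 4, and the supertropical addition rules w.r.t. nu(a) = a + a.\<close>

definition nu :: "'a::plus \<Rightarrow> 'a" where
  "nu a = a + a"

definition supertropical :: "'a::{comm_semiring_0, comm_monoid_mult} itself \<Rightarrow> bool" where
  "supertropical _ \<longleftrightarrow>
     (1 + 1 :: 'a) = 1 + 1 + 1 + 1 \<and>
     (\<forall>a b::'a. nu a \<noteq> nu b \<longrightarrow> a + b \<in> {a, b}) \<and>
     (\<forall>a b::'a. nu a = nu b \<longrightarrow> a + b = nu a)"

text \<open>A pure monomial in x_0..x_{n-1} is given by its exponent list c (length n):
  x_0^{c!0} ... x_{n-1}^{c!(n-1)}.\<close>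

definition monomial_eval :: "nat list \<Rightarrow> (nat \<Rightarrow> 'a::comm_monoid_mult) \<Rightarrow> 'a" where
  "monomial_eval d x = (\<Prod>i<length d. x i ^ (d ! i))"

text \<open>Exponent lists of the monomials x_{sigma(0)}^{c_0} ... x_{sigma(n-1)}^{c_{n-1}}:
  the variable sigma(i) carries exponent c_i.\<close>

definition sym_orbit :: "nat \<Rightarrow> nat list \<Rightarrow> nat list set" where
  "sym_orbit n c = {map (\<lambda>j. c ! (inv \<sigma> j)) [0..<n] | \<sigma>. \<sigma> permutes {0..<n}}"

text \<open>Minimal symmetrization: each distinct monomial of the orbit counted exactly once.\<close>

definition Minsym :: "nat \<Rightarrow> nat list \<Rightarrow> (nat \<Rightarrow> 'a::{comm_semiring_0, comm_monoid_mult}) \<Rightarrow> 'a" where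
  "Minsym n c x = (\<Sum>d\<in>sym_orbit n c. monomial_eval d x)"

definition esym :: "nat \<Rightarrow> nat \<Rightarrow> (nat \<Rightarrow> 'a::{comm_semiring_0, comm_monoid_mult}) \<Rightarrow> 'a" where
  "esym n k x = (\<Sum>S\<in>{S. S \<subseteq> {0..<n} \<and> card S = k}. \<Prod>i\<in>S. x i)"

end

theory Submission
  imports Defs
begin


context
  fixes ty :: "'a::{comm_semiring_0, comm_monoid_mult} itself"
  assumes ST: "supertropical TYPE('a)"
begin

lemma st_four: "(1 + 1 :: 'a) = 1 + 1 + 1 + 1"
  using ST unfolding supertropical_def by blast

lemma st_tie: "nu (a::'a) = nu b \<Longrightarrow> a + b = nu a"
  using ST unfolding supertropical_def by blast

lemma st_nontie: "nu (a::'a) \<noteq> nu b \<Longrightarrow> a + b = a \<or> a + b = b"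
  using ST unfolding supertropical_def by blast

lemma nu_nu: "nu (nu (a::'a)) = nu a"
proof -
  have "nu (nu a) = (1 + 1 + 1 + 1) * a" by (simp add: nu_def algebra_simps)
  also have "\<dots> = (1 + 1) * a" using st_four by simp
  finally show ?thesis by (simp add: nu_def algebra_simps)
qed

lemma nu_add: "nu ((a::'a) + b) = nu a + nu b"
  by (simp add: nu_def algebra_simps)

lemma nu_mult: "nu ((a::'a) * b) = nu a * b"
  by (simp add: nu_def algebra_simps)

lemma nu_mult2: "nu ((a::'a) * b) = a * nu b"
  by (simp add: nu_def algebra_simps)

definition le :: "'a \<Rightarrow> 'a \<Rightarrow> bool" where "le a b \<longleftrightarrow> nu a + nu b = nu b"

lemma le_refl: "le a a"
  unfolding le_def using nu_nu by (simp add: nu_def)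

lemma le_eq: "nu a = nu b \<Longrightarrow> le a b"
  unfolding le_def using nu_nu by (simp add: nu_def)

lemma le_total: "le a b \<or> le b a"
proof (cases "nu a = nu b")
  case True then show ?thesis using le_eq by blast
next
  case False
  then have "nu (nu a) \<noteq> nu (nu b)" using nu_nu by simp
  from st_nontie[OF this] show ?thesis unfolding le_def by (auto simp: add.commute)
qed

lemma le_antisym: "le a b \<Longrightarrow> le b a \<Longrightarrow> nu a = nu b"
  unfolding le_def by (simp add: add.commute)

lemma le_trans: "le a b \<Longrightarrow> le b c \<Longrightarrow> le a c"
  unfolding le_def by (metis add.assoc)

lemma le_strict: "le a b \<Longrightarrow> nu a \<noteq> nu b \<Longrightarrow> a + b = b"
proof -
  assume l: "le a b" and n: "nu a \<noteq> nu b"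
  from st_nontie[OF n] show ?thesis
  proof
    assume "a + b = a"
    then have "nu a = nu a + nu b" using nu_add by metis
    then show ?thesis using l n unfolding le_def by (simp add: add.commute)
  qed
qed

lemma le_mult: "le a b \<Longrightarrow> le (a * m) (b * m)"
  unfolding le_def nu_mult by (metis distrib_right)

lemma le_mult2: "le a b \<Longrightarrow> le c d \<Longrightarrow> le (a * c) (b * d)"
  by (metis le_mult le_trans mult.commute)

lemma le_pow: "le a b \<Longrightarrow> le (a ^ k) (b ^ k)"
proof (induction k)
  case 0 then show ?case using le_refl by simp
next
  case (Suc k)
  then have "le (a * a ^ k) (b * b ^ k)" using le_mult2 by blast
  then show ?case by simp
qed

lemma absorb_le: "a + b = a \<Longrightarrow> le b a"
proof -
  assume h: "a + b = a"
  have "nu a = nu a + nu b" using nu_add[of a b] h by simp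
  then show ?thesis unfolding le_def by (simp add: add.commute)
qed

lemma ghost_tie: "(a::'a) + b = a \<Longrightarrow> nu a = nu b \<Longrightarrow> a = nu a"
  using st_tie[of a b] by simp

lemma ghost_absorb: "le b a \<Longrightarrow> a = nu a \<Longrightarrow> a + b = a"
proof (cases "nu a = nu b")
  case True
  assume "a = nu a"
  then show ?thesis using st_tie[OF True] by simp
next
  case False
  assume "le b a"
  then show ?thesis using le_strict False by (metis add.commute)
qed

lemma nu_eq_pow: "nu X = nu Y \<Longrightarrow> nu ((X::'a) ^ a * Y ^ b) = nu (X ^ (a + b))"
proof (induction b arbitrary: a)
  case 0 then show ?case by simp
next
  case (Suc b)
  have "X ^ a * Y ^ Suc b = Y * (X ^ a * Y ^ b)" by (simp add: algebra_simps)
  then have "nu (X ^ a * Y ^ Suc b) = X ^ a * Y ^ b * nu Y"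
    by (simp add: nu_mult mult.commute)
  also have "\<dots> = X ^ a * Y ^ b * nu X" using Suc by simp
  also have "\<dots> = nu (X * (X ^ a * Y ^ b))" by (simp add: nu_mult mult.commute)
  also have "\<dots> = nu (X ^ Suc a * Y ^ b)" by (simp add: algebra_simps)
  also have "\<dots> = nu (X ^ (Suc a + b))" using Suc by blast
  finally show ?case by simp
qed

lemma dom_helper:
  assumes "le t M" "le Z M" "nu t = nu M \<Longrightarrow> M = nu M"
  shows "M + Z + t = M + Z"
proof (cases "nu t = nu M")
  case True
  then have g: "M = nu M" using assms by blast
  then have "M + Z = M" using ghost_absorb assms by blast
  moreover have "M + t = M" using ghost_absorb assms g by blast
  ultimately show ?thesis by simp
next
  case False
  then have "t + M = M" using le_strict assms by blast
  then show ?thesis by (metis add.assoc add.commute)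
qed

lemma core:
  assumes r: "2 \<le> r"
  shows "(X::'a) ^ r + Y ^ r + X ^ (r - 1) * Y = X ^ r + Y ^ r"
proof (cases "nu X = nu Y")
  case True
  have e1: "nu (Y ^ r) = nu (X ^ r)" using nu_eq_pow[OF True, of 0 r] by simp
  have e2: "nu (X ^ (r - 1) * Y) = nu (X ^ r)" using nu_eq_pow[OF True, of "r - 1" 1] r by simp
  have "X ^ r + Y ^ r = nu (X ^ r)" using st_tie e1 by metis
  moreover have "nu (X ^ r) + X ^ (r - 1) * Y = nu (X ^ r)"
    using st_tie[of "nu (X ^ r)" "X ^ (r - 1) * Y"] e2 nu_nu by simp
  ultimately show ?thesis by simp
next
  case False
  obtain r' where rr: "r = Suc (Suc r')" using r by (metis add_2_eq_Suc le_Suc_ex)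
  show ?thesis
  proof (cases "le Y X")
    case True
    have XY: "Y + X = X" using le_strict[OF True] False by simp
    have u: "X ^ r = X ^ r + X ^ (r - 1) * Y"
      using arg_cong[OF XY, of "\<lambda>z. X ^ (r - 1) * z"] rr by (simp add: algebra_simps)
    show ?thesis
    proof (rule dom_helper)
      show "le (X ^ (r - 1) * Y) (X ^ r)" using absorb_le u by metis
      show "le (Y ^ r) (X ^ r)" using le_pow True by blast
      show "X ^ r = nu (X ^ r)" if "nu (X ^ (r - 1) * Y) = nu (X ^ r)"
        using ghost_tie u that by metis
    qed
  next
    case nle: False
    then have T: "le X Y" using le_total by blast
    have XY: "X + Y = Y" using le_strict[OF T] False by simp
    have u: "Y ^ r = Y ^ r + Y ^ (r - 1) * X"
      using arg_cong[OF XY, of "\<lambda>z. Y ^ (r - 1) * z"] rr by (simp add: algebra_simps)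
    have l1: "le (Y ^ (r - 1) * X) (Y ^ r)" using absorb_le u by metis
    have l2: "le (X ^ (r - 1) * Y) (Y ^ (r - 1) * X)"
    proof -
      have "le (X ^ r' * (X * Y)) (Y ^ r' * (X * Y))" using le_mult le_pow[OF T] by blast
      then show ?thesis using rr by (simp add: algebra_simps)
    qed
    have "Y ^ r + X ^ r + X ^ (r - 1) * Y = Y ^ r + X ^ r"
    proof (rule dom_helper)
      show "le (X ^ (r - 1) * Y) (Y ^ r)" using le_trans l1 l2 by blast
      show "le (X ^ r) (Y ^ r)" using le_pow T by blast
      show "Y ^ r = nu (Y ^ r)" if h: "nu (X ^ (r - 1) * Y) = nu (Y ^ r)"
      proof -
        have "le (Y ^ r) (X ^ (r - 1) * Y)" using le_eq h by metis
        then have "le (Y ^ r) (Y ^ (r - 1) * X)" using le_trans l2 by blast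
        then have "nu (Y ^ r) = nu (Y ^ (r - 1) * X)" using le_antisym l1 by blast
        then show ?thesis using ghost_tie u by metis
      qed
    qed
    then show ?thesis by (simp add: add.commute)
  qed
qed

end


lemma orbit_mem: "\<sigma> permutes {0..<n} \<Longrightarrow> map (\<lambda>j. c ! inv \<sigma> j) [0..<n] \<in> sym_orbit n c"
  unfolding sym_orbit_def by blast

lemma orbit_elim:
  assumes "d \<in> sym_orbit n c"
  obtains \<sigma> where "\<sigma> permutes {0..<n}" "d = map (\<lambda>j. c ! inv \<sigma> j) [0..<n]"
  using assms unfolding sym_orbit_def by blast

lemma orbit_length: "d \<in> sym_orbit n c \<Longrightarrow> length d = n"
  unfolding sym_orbit_def by auto

lemma inv_lt: "(\<sigma>::nat\<Rightarrow>nat) permutes {0..<n} \<Longrightarrow> j < n \<Longrightarrow> inv \<sigma> j < n"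
proof -
  assume a: "\<sigma> permutes {0..<n}" "j < n"
  have "j \<in> {0..<n}" using a(2) by simp
  then have "inv \<sigma> j \<in> {0..<n}" using permutes_in_image[OF permutes_inv[OF a(1)], of j] by blast
  then show ?thesis by simp
qed

lemma perm_lt: "(\<sigma>::nat\<Rightarrow>nat) permutes {0..<n} \<Longrightarrow> j < n \<Longrightarrow> \<sigma> j < n"
proof -
  assume a: "\<sigma> permutes {0..<n}" "j < n"
  have "j \<in> {0..<n}" using a(2) by simp
  then have "\<sigma> j \<in> {0..<n}" using permutes_in_image[OF a(1), of j] by blast
  then show ?thesis by simp
qed

lemma orbit_self: "length c = n \<Longrightarrow> c \<in> sym_orbit n c"
proof -
  assume "length c = n"
  then have "c = map (\<lambda>j. c ! inv id j) [0..<n]"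
    using map_nth[of c] by (simp add: inv_id)
  then show ?thesis using orbit_mem[of id n c] by simp
qed

lemma orbit_sub:
  assumes c: "length c = n" and d: "d \<in> sym_orbit n c"
  shows "sym_orbit n d \<subseteq> sym_orbit n c"
proof
  fix e assume "e \<in> sym_orbit n d"
  then obtain \<tau> where t: "\<tau> permutes {0..<n}" and e: "e = map (\<lambda>j. d ! inv \<tau> j) [0..<n]"
    by (rule orbit_elim)
  obtain \<sigma> where s: "\<sigma> permutes {0..<n}" and dd: "d = map (\<lambda>j. c ! inv \<sigma> j) [0..<n]"
    using d by (rule orbit_elim)
  have ts: "\<tau> \<circ> \<sigma> permutes {0..<n}" using permutes_compose[OF s t] .
  have iv: "inv (\<tau> \<circ> \<sigma>) = inv \<sigma> \<circ> inv \<tau>"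
    using o_inv_distrib permutes_bij s t by blast
  have "e = map (\<lambda>j. c ! inv (\<tau> \<circ> \<sigma>) j) [0..<n]"
    unfolding e iv using inv_lt[OF t] by (simp add: dd)
  then show "e \<in> sym_orbit n c" using orbit_mem[OF ts] by simp
qed

lemma orbit_eq:
  assumes c: "length c = n" and d: "d \<in> sym_orbit n c"
  shows "sym_orbit n d = sym_orbit n c"
proof
  show "sym_orbit n d \<subseteq> sym_orbit n c" using orbit_sub[OF c d] .
  obtain \<sigma> where s: "\<sigma> permutes {0..<n}" and dd: "d = map (\<lambda>j. c ! inv \<sigma> j) [0..<n]"
    using d by (rule orbit_elim)
  have c': "c = map (\<lambda>j. d ! inv (inv \<sigma>) j) [0..<n]"
  proof (rule nth_equalityI)
    show "length c = length (map (\<lambda>j. d ! inv (inv \<sigma>) j) [0..<n])" using c by simp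
    fix i assume "i < length c"
    then have i: "i < n" using c by simp
    have "inv (inv \<sigma>) i = \<sigma> i" using permutes_inv_inv[OF s] by simp
    then show "c ! i = map (\<lambda>j. d ! inv (inv \<sigma>) j) [0..<n] ! i"
      using i perm_lt[OF s i] by (simp add: dd permutes_inverses[OF s])
  qed
  have "c \<in> sym_orbit n d" using orbit_mem[OF permutes_inv[OF s], of d] c' by simp
  then show "sym_orbit n c \<subseteq> sym_orbit n d" using orbit_sub[of d n c] orbit_length[OF d] by blast
qed

lemma orbit_finite: "finite (sym_orbit n c)"
proof -
  have "sym_orbit n c = (\<lambda>\<sigma>. map (\<lambda>j. c ! inv \<sigma> j) [0..<n]) ` {\<sigma>. \<sigma> permutes {0..<n}}"
    unfolding sym_orbit_def by blast
  then show ?thesis using finite_permutations[of "{0..<n}"] by simp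
qed

lemma orbit_sum:
  assumes c: "length c = n" and d: "d \<in> sym_orbit n c"
  shows "(\<Sum>j<n. F (d ! j)) = (\<Sum>i<n. F (c ! i))"
proof -
  obtain \<sigma> where s: "\<sigma> permutes {0..<n}" and dd: "d = map (\<lambda>j. c ! inv \<sigma> j) [0..<n]"
    using d by (rule orbit_elim)
  have "(\<Sum>j<n. F (d ! j)) = (\<Sum>j<n. F (c ! inv \<sigma> j))" by (simp add: dd)
  also have "\<dots> = (\<Sum>i<n. F (c ! i))"
    using sum.reindex_bij_betw[OF permutes_imp_bij[OF permutes_inv[OF s]], of "\<lambda>i. F (c ! i)"]
    by (simp add: atLeast0LessThan)
  finally show ?thesis .
qed

definition addS :: "nat list \<Rightarrow> nat set \<Rightarrow> nat \<Rightarrow> nat list" where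
  "addS d S n = map (\<lambda>j. d ! j + (if j \<in> S then 1 else 0)) [0..<n]"

lemma prod_addS:
  fixes x :: "nat \<Rightarrow> 'a::comm_monoid_mult"
  assumes "length d = n" "S \<subseteq> {0..<n}"
  shows "monomial_eval d x * (\<Prod>i\<in>S. x i) = monomial_eval (addS d S n) x"
proof -
  have "(\<Prod>i\<in>S. x i) = (\<Prod>i<n. if i \<in> S then x i else 1)"
  proof -
    have "S = {i \<in> {..<n}. i \<in> S}" using assms(2) by auto
    then show ?thesis using prod.inter_filter[of "{..<n}" x "\<lambda>i. i \<in> S"] by simp
  qed
  moreover have "(\<Prod>i<n. x i ^ (d!i)) * (\<Prod>i<n. if i \<in> S then x i else 1)
      = (\<Prod>i<n. x i ^ (d!i) * (if i \<in> S then x i else 1))"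
    by (rule prod.distrib[symmetric])
  moreover have "\<dots> = (\<Prod>i<n. x i ^ (addS d S n ! i))"
    by (rule prod.cong) (auto simp: addS_def mult.commute)
  ultimately show ?thesis using assms
    by (simp add: monomial_eval_def addS_def)
qed

lemma mon_split:
  fixes x :: "nat \<Rightarrow> 'a::comm_monoid_mult"
  assumes "length v = n" "p < n" "q < n" "p \<noteq> q"
  shows "monomial_eval v x = (\<Prod>t\<in>{..<n}-{p,q}. x t ^ (v!t)) * (x p ^ (v!p) * x q ^ (v!q))"
proof -
  have "monomial_eval v x = (\<Prod>t<n. x t ^ (v!t))" using assms by (simp add: monomial_eval_def)
  also have "\<dots> = x p ^ (v!p) * (\<Prod>t\<in>{..<n}-{p}. x t ^ (v!t))"
    using prod.remove[of "{..<n}" p] assms by simp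
  also have "(\<Prod>t\<in>{..<n}-{p}. x t ^ (v!t)) = x q ^ (v!q) * (\<Prod>t\<in>{..<n}-{p}-{q}. x t ^ (v!t))"
    using prod.remove[of "{..<n}-{p}" q] assms by simp
  also have "{..<n}-{p}-{q} = {..<n}-{p,q}" by auto
  finally show ?thesis by (simp add: algebra_simps)
qed



lemma pair_ident:
  fixes x :: "nat \<Rightarrow> 'a::{comm_semiring_0, comm_monoid_mult}"
  assumes ST: "supertropical TYPE('a)"
    and u: "length u = n" and pq: "p < n" "q < n" "p \<noteq> q" and big: "u!q + 2 \<le> u!p"
  shows "monomial_eval u x + monomial_eval (map (\<lambda>t. u ! transpose p q t) [0..<n]) x
       + monomial_eval (map (\<lambda>t. u!t - (if t = p then 1 else 0) + (if t = q then 1 else 0)) [0..<n]) x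
       = monomial_eval u x + monomial_eval (map (\<lambda>t. u ! transpose p q t) [0..<n]) x"
proof -
  define h where "h = map (\<lambda>t. u ! transpose p q t) [0..<n]"
  define w where "w = map (\<lambda>t. u!t - (if t = p then 1 else 0) + (if t = q then 1 else 0)) [0..<n]"
  define R where "R = (\<Prod>t\<in>{..<n}-{p,q}. x t ^ (u!t))"
  define a where "a = u!p"
  define b where "b = u!q"
  have ab0: "a = b + (a - b)" "2 \<le> a - b" using big by (auto simp: a_def b_def)
  then obtain r where ab: "a = b + r" and r: "2 \<le> r" by blast
  let ?X = "x p" and ?Y = "x q"
  have Rh: "(\<Prod>t\<in>{..<n}-{p,q}. x t ^ (h!t)) = R"
    unfolding R_def by (rule prod.cong) (auto simp: h_def)
  have Rw: "(\<Prod>t\<in>{..<n}-{p,q}. x t ^ (w!t)) = R"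
    unfolding R_def by (rule prod.cong) (auto simp: w_def)
  have mu: "monomial_eval u x = R * (?X ^ a * ?Y ^ b)"
    using mon_split[OF u pq] unfolding R_def a_def b_def .
  have mh: "monomial_eval h x = R * (?X ^ b * ?Y ^ a)"
    using mon_split[of h n p q x] pq Rh by (simp add: h_def a_def b_def)
  have mw: "monomial_eval w x = R * (?X ^ (a - 1) * ?Y ^ (b + 1))"
    using mon_split[of w n p q x] pq Rw by (simp add: w_def a_def b_def)
  define Q where "Q = R * ?X ^ b * ?Y ^ b"
  obtain r' where rr: "r = Suc r'" using r by (cases r) auto
  have e1: "monomial_eval u x = Q * ?X ^ r" using mu ab by (simp add: Q_def power_add algebra_simps)
  have e2: "monomial_eval h x = Q * ?Y ^ r" using mh ab by (simp add: Q_def power_add algebra_simps)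
  have e3: "monomial_eval w x = Q * (?X ^ (r - 1) * ?Y)"
  proof -
    have "a - 1 = b + r'" using ab rr by simp
    then show ?thesis using mw rr by (simp add: Q_def power_add algebra_simps)
  qed
  have "monomial_eval u x + monomial_eval h x + monomial_eval w x
      = Q * (?X ^ r + ?Y ^ r + ?X ^ (r - 1) * ?Y)"
    using e1 e2 e3 by (simp add: distrib_left)
  also have "\<dots> = Q * (?X ^ r + ?Y ^ r)" using core[OF ST r] by simp
  also have "\<dots> = monomial_eval u x + monomial_eval h x" using e1 e2 by (simp add: distrib_left)
  finally show ?thesis unfolding h_def w_def .
qed

definition good :: "nat \<Rightarrow> nat list \<Rightarrow> (nat \<Rightarrow> 'a::{comm_semiring_0, comm_monoid_mult}) \<Rightarrow> nat list \<Rightarrow> bool" where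
  "good n c' x e \<longleftrightarrow> sym_orbit n e = sym_orbit n c' \<or>
     (\<forall>e''\<in>sym_orbit n e. Minsym n c' x + monomial_eval e'' x = Minsym n c' x)"

lemma good_perm:
  assumes "length f = n" "e \<in> sym_orbit n f" "good n c' x f"
  shows "good n c' x e"
  using assms orbit_eq[OF assms(1,2)] unfolding good_def by simp

lemma good_transfer:
  fixes x :: "nat \<Rightarrow> 'a::{comm_semiring_0, comm_monoid_mult}"
  assumes ST: "supertropical TYPE('a)"
    and f: "length f = n" and ij: "i < n" "j < n" "i \<noteq> j" and big: "f!j + 2 \<le> f!i"
    and g: "good n c' x f"
    and e: "e = map (\<lambda>t. f!t - (if t = i then 1 else 0) + (if t = j then 1 else 0)) [0..<n]"
  shows "\<forall>e''\<in>sym_orbit n e. Minsym n c' x + monomial_eval e'' x = Minsym n c' x"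
proof
  fix e'' assume "e'' \<in> sym_orbit n e"
  then obtain \<tau> where t: "\<tau> permutes {0..<n}" and ee: "e'' = map (\<lambda>t. e ! inv \<tau> t) [0..<n]"
    by (rule orbit_elim)
  define p where "p = \<tau> i"
  define q where "q = \<tau> j"
  have p: "p < n" and q: "q < n" using perm_lt[OF t] ij unfolding p_def q_def by auto
  have pq: "p \<noteq> q" unfolding p_def q_def using ij permutes_inj[OF t] by (simp add: inj_eq)
  define f'' where "f'' = map (\<lambda>t. f ! inv \<tau> t) [0..<n]"
  define h'' where "h'' = map (\<lambda>t. f'' ! transpose p q t) [0..<n]"
  have lf: "length f'' = n" by (simp add: f''_def)
  have f1: "f'' \<in> sym_orbit n f" using orbit_mem[OF t] f''_def by simp
  have tpq: "transpose p q permutes {0..<n}" by (rule permutes_swap_id) (use p q in auto)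
  have "h'' \<in> sym_orbit n f''" using orbit_mem[OF tpq, of f''] unfolding h''_def by simp
  then have h1: "h'' \<in> sym_orbit n f" using orbit_eq[OF f f1] orbit_eq[OF lf] by auto
  have fp: "f'' ! p = f ! i" using p by (simp add: f''_def p_def permutes_inverses[OF t])
  have fq: "f'' ! q = f ! j" using q by (simp add: f''_def q_def permutes_inverses[OF t])
  have e2: "e'' = map (\<lambda>t. f''!t - (if t = p then 1 else 0) + (if t = q then 1 else 0)) [0..<n]"
  proof (rule nth_equalityI)
    show "length e'' = length (map (\<lambda>t. f''!t - (if t = p then 1 else 0) + (if t = q then 1 else 0)) [0..<n])"
      by (simp add: ee)
    fix k assume "k < length e''"
    then have k: "k < n" by (simp add: ee)
    have ik: "inv \<tau> k < n" using inv_lt[OF t k] .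
    have c1: "(inv \<tau> k = i) = (k = p)" unfolding p_def using permutes_inv_eq[OF t] by auto
    have c2: "(inv \<tau> k = j) = (k = q)" unfolding q_def using permutes_inv_eq[OF t] by auto
    show "e'' ! k = map (\<lambda>t. f''!t - (if t = p then 1 else 0) + (if t = q then 1 else 0)) [0..<n] ! k"
      using k ik c1 c2 by (simp add: ee e f''_def)
  qed
  have big2: "f''!q + 2 \<le> f''!p" using fp fq big by simp
  have key: "monomial_eval f'' x + monomial_eval h'' x + monomial_eval e'' x
      = monomial_eval f'' x + monomial_eval h'' x"
    using pair_ident[OF ST lf p q pq big2, of x] unfolding e2 h''_def .
  have neq: "f'' \<noteq> h''"
  proof
    assume "f'' = h''"
    then have "f'' ! p = h'' ! p" by simp
    then show False using p big2 by (simp add: h''_def)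
  qed
  let ?T = "Minsym n c' x"
  from g show "?T + monomial_eval e'' x = ?T" unfolding good_def
  proof
    assume O: "sym_orbit n f = sym_orbit n c'"
    let ?O = "sym_orbit n c'"
    have fin: "finite ?O" by (rule orbit_finite)
    have f2: "f'' \<in> ?O" and h2: "h'' \<in> ?O" using f1 h1 O by auto
    have "?T = monomial_eval f'' x + (\<Sum>d\<in>?O - {f''}. monomial_eval d x)"
      unfolding Minsym_def using sum.remove[OF fin f2] .
    also have "(\<Sum>d\<in>?O - {f''}. monomial_eval d x) = monomial_eval h'' x + (\<Sum>d\<in>?O - {f''} - {h''}. monomial_eval d x)"
      using sum.remove[of "?O - {f''}" h''] fin h2 neq by auto
    finally have TT: "?T = (monomial_eval f'' x + monomial_eval h'' x) + (\<Sum>d\<in>?O - {f''} - {h''}. monomial_eval d x)"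
      by (simp add: add.assoc)
    have "(monomial_eval f'' x + monomial_eval h'' x) + (\<Sum>d\<in>?O - {f''} - {h''}. monomial_eval d x) + monomial_eval e'' x
       = (monomial_eval f'' x + monomial_eval h'' x + monomial_eval e'' x) + (\<Sum>d\<in>?O - {f''} - {h''}. monomial_eval d x)"
      by (simp add: ac_simps)
    also have "\<dots> = (monomial_eval f'' x + monomial_eval h'' x) + (\<Sum>d\<in>?O - {f''} - {h''}. monomial_eval d x)"
      using key by simp
    finally show ?thesis unfolding TT[symmetric] .
  next
    assume A: "\<forall>e''\<in>sym_orbit n f. ?T + monomial_eval e'' x = ?T"
    then have a1: "?T + monomial_eval f'' x = ?T" and a2: "?T + monomial_eval h'' x = ?T"
      using f1 h1 by auto
    have "?T + monomial_eval e'' x = (?T + monomial_eval f'' x + monomial_eval h'' x) + monomial_eval e'' x"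
      using a1 a2 by simp
    also have "\<dots> = ?T + (monomial_eval f'' x + monomial_eval h'' x + monomial_eval e'' x)"
      by (simp add: add.assoc)
    also have "\<dots> = ?T + (monomial_eval f'' x + monomial_eval h'' x)" using key by simp
    also have "\<dots> = ?T" using a1 a2 by (simp add: add.assoc[symmetric])
    finally show ?thesis .
  qed
qed



definition desc :: "nat list \<Rightarrow> bool" where
  "desc c \<longleftrightarrow> (\<forall>i j. i \<le> j \<longrightarrow> j < length c \<longrightarrow> c!j \<le> c!i)"

lemma set_unique:
  fixes f :: "nat \<Rightarrow> nat"
  assumes fin: "finite S" "finite T" and cd: "card S = card T"
    and hT: "\<forall>j\<in>T. \<theta> \<le> f j" and hS: "\<forall>j\<in>S-T. f j < \<theta>" and sm: "sum f T \<le> sum f S"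
  shows "S = T"
proof (rule ccontr)
  assume ne: "S \<noteq> T"
  have "S - T \<noteq> {}"
  proof
    assume "S - T = {}"
    then have "S \<subseteq> T" by blast
    then show False using card_subset_eq[OF fin(2)] cd ne by blast
  qed
  then have cpos: "card (S - T) > 0" using fin by (simp add: card_gt_0_iff)
  have c1: "card (S - T) = card S - card (S \<inter> T)" using fin by (simp add: card_Diff_subset_Int)
  have c2: "card (T - S) = card T - card (T \<inter> S)" using fin by (simp add: card_Diff_subset_Int)
  have cc: "card (S - T) = card (T - S)" using c1 c2 cd by (simp add: Int_commute)
  have s1: "sum f (S - T) < card (S - T) * \<theta>"
    using sum_bounded_above_strict[of "S - T" f \<theta>] hS cpos by simp
  have s2: "card (T - S) * \<theta> \<le> sum f (T - S)"
    using sum_bounded_below[of "T - S" \<theta> f] hT by simp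
  have "sum f S = sum f (S \<inter> T) + sum f (S - T)" using sum.Int_Diff[OF fin(1)] by blast
  also have "\<dots> < sum f (T \<inter> S) + sum f (T - S)" using s1 s2 cc by (simp add: Int_commute)
  also have "\<dots> = sum f T" using sum.Int_Diff[OF fin(2), of f S] by simp
  finally show False using sm by simp
qed

lemma absorb_sum:
  assumes "finite B" "\<forall>p\<in>B. T + f p = (T::'a::comm_monoid_add)"
  shows "T + sum f B = T"
  using assms
proof (induction B rule: finite_induct)
  case empty then show ?case by simp
next
  case (insert a F)
  have "T + sum f (insert a F) = (T + f a) + sum f F" using insert(1,2) by (simp add: add.assoc)
  also have "\<dots> = T" using insert by simp
  finally show ?case .
qed

lemma addS_top:
  assumes c: "length c = n" and k: "k \<le> n" and s: "\<sigma> permutes {0..<n}"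
  shows "addS (map (\<lambda>j. c ! inv \<sigma> j) [0..<n]) (\<sigma> ` {..<k}) n
       = map (\<lambda>j. addS c {..<k} n ! inv \<sigma> j) [0..<n]"
proof (rule nth_equalityI)
  show "length (addS (map (\<lambda>j. c ! inv \<sigma> j) [0..<n]) (\<sigma> ` {..<k}) n) =
        length (map (\<lambda>j. addS c {..<k} n ! inv \<sigma> j) [0..<n])" by (simp add: addS_def)
  fix j assume "j < length (addS (map (\<lambda>j. c ! inv \<sigma> j) [0..<n]) (\<sigma> ` {..<k}) n)"
  then have j: "j < n" by (simp add: addS_def)
  have ij: "inv \<sigma> j < n" using inv_lt[OF s j] .
  have mem: "(j \<in> \<sigma> ` {..<k}) = (inv \<sigma> j < k)"
  proof
    assume "j \<in> \<sigma> ` {..<k}"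
    then obtain i where "i < k" "j = \<sigma> i" by auto
    then show "inv \<sigma> j < k" using permutes_inverses[OF s] by simp
  next
    assume "inv \<sigma> j < k"
    moreover have "j = \<sigma> (inv \<sigma> j)" by (simp add: permutes_inverses[OF s])
    ultimately show "j \<in> \<sigma> ` {..<k}" by blast
  qed
  show "addS (map (\<lambda>j. c ! inv \<sigma> j) [0..<n]) (\<sigma> ` {..<k}) n ! j =
        map (\<lambda>j. addS c {..<k} n ! inv \<sigma> j) [0..<n] ! j"
    using j ij mem by (simp add: addS_def)
qed

lemma good_all:
  fixes x :: "nat \<Rightarrow> 'a::{comm_semiring_0, comm_monoid_mult}"
  assumes ST: "supertropical TYPE('a)"
    and c: "length c = n" and dc: "desc c" and k: "k \<le> n" and s: "\<sigma> permutes {0..<n}"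
  shows "S \<subseteq> {0..<n} \<Longrightarrow> card S = k \<Longrightarrow>
    good n (addS c {..<k} n) x (addS (map (\<lambda>j. c ! inv \<sigma> j) [0..<n]) S n)"
proof (induction "card (S - \<sigma> ` {..<k})" arbitrary: S)
  case 0
  define T where "T = \<sigma> ` {..<k}"
  have finS: "finite S" using 0 finite_subset by blast
  have T: "T \<subseteq> {0..<n}" "card T = k"
    using perm_lt[OF s] k card_image[OF permutes_inj_on[OF s], of "{..<k}"] unfolding T_def
    by auto
  have "S - T = {}" using 0 finS T_def by simp
  then have "S = T" using card_subset_eq[of T S] T 0 finite_subset by blast
  then have e: "addS (map (\<lambda>j. c ! inv \<sigma> j) [0..<n]) S n = map (\<lambda>j. addS c {..<k} n ! inv \<sigma> j) [0..<n]"
    using addS_top[OF c k s] T_def by simp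
  have "addS (map (\<lambda>j. c ! inv \<sigma> j) [0..<n]) S n \<in> sym_orbit n (addS c {..<k} n)"
    unfolding e by (rule orbit_mem[OF s])
  then show ?case unfolding good_def using orbit_eq[of "addS c {..<k} n" n] by (simp add: addS_def)
next
  case (Suc m S)
  define T where "T = \<sigma> ` {..<k}"
  define d where "d = map (\<lambda>j. c ! inv \<sigma> j) [0..<n]"
  have ld: "length d = n" by (simp add: d_def)
  have finS: "finite S" using Suc finite_subset by blast
  have finT: "finite T" unfolding T_def by simp
  have T: "T \<subseteq> {0..<n}" "card T = k"
    using perm_lt[OF s] k card_image[OF permutes_inj_on[OF s], of "{..<k}"] unfolding T_def
    by auto
  have "S - T \<noteq> {}"
  proof
    assume "S - T = {}"
    then have "card (S - T) = 0" by (simp only: card.empty)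
    then show False using Suc(2) unfolding T_def by linarith
  qed
  then obtain j where jST: "j \<in> S" "j \<notin> T" by blast
  have "T - S \<noteq> {}"
  proof
    assume "T - S = {}"
    then have "T \<subseteq> S" by blast
    then have "T = S" using card_subset_eq[OF finS] T Suc by simp
    then show False using jST by simp
  qed
  then obtain i where iTS: "i \<in> T" "i \<notin> S" by blast
  have i: "i < n" and j: "j < n" using iTS jST T Suc by auto
  have ij: "i \<noteq> j" using iTS jST by auto
  define S' where "S' = insert i (S - {j})"
  have S'1: "S' \<subseteq> {0..<n}" using Suc i unfolding S'_def by auto
  have kpos: "k > 0" using Suc(4) finS jST card_gt_0_iff by blast
  have S'2: "card S' = k" using Suc iTS jST finS kpos unfolding S'_def by simp
  have "S' - T = (S - T) - {j}" unfolding S'_def using iTS by auto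
  then have "m = card (S' - \<sigma> ` {..<k})" using Suc(2) jST T_def finS by simp
  then have gf: "good n (addS c {..<k} n) x (addS d S' n)" using Suc(1) S'1 S'2 d_def by simp
  define f where "f = addS d S' n"
  define e where "e = addS d S n"
  have lf: "length f = n" by (simp add: f_def addS_def)
  have ii: "inv \<sigma> i < k" using iTS unfolding T_def using permutes_inverses[OF s] by auto
  have ij2: "\<not> inv \<sigma> j < k"
  proof
    assume "inv \<sigma> j < k"
    then have "\<sigma> (inv \<sigma> j) \<in> T" unfolding T_def by simp
    then show False using jST permutes_inverses[OF s] by simp
  qed
  have dij: "d ! j \<le> d ! i"
    using dc ii ij2 inv_lt[OF s j] c i j unfolding desc_def d_def by simp
  have fi: "f ! i = d ! i + 1" and fj: "f ! j = d ! j" using i j ij unfolding f_def S'_def addS_def by auto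
  have ei: "e ! i = d ! i" and ej: "e ! j = d ! j + 1" using i j iTS jST unfolding e_def addS_def by auto
  have eo: "\<And>t. t < n \<Longrightarrow> t \<noteq> i \<Longrightarrow> t \<noteq> j \<Longrightarrow> e ! t = f ! t"
    unfolding e_def f_def S'_def addS_def by auto
  have le: "length e = n" by (simp add: e_def addS_def)
  show ?case
  proof (cases "d ! i = d ! j")
    case True
    have "e = map (\<lambda>t. f ! inv (transpose i j) t) [0..<n]"
    proof (rule nth_equalityI)
      show "length e = length (map (\<lambda>t. f ! inv (transpose i j) t) [0..<n])" using le by simp
      fix t assume "t < length e"
      then have t: "t < n" using le by simp
      have "e ! t = f ! transpose i j t"
      proof (cases "t = i")
        case True
        then show ?thesis using ei fj \<open>d ! i = d ! j\<close> by simp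
      next
        case False
        note F1 = False
        show ?thesis
        proof (cases "t = j")
          case True
          then show ?thesis using ej fi \<open>d ! i = d ! j\<close> by simp
        next
          case False
          then show ?thesis using F1 eo[OF t] by simp
        qed
      qed
      then show "e ! t = map (\<lambda>t. f ! inv (transpose i j) t) [0..<n] ! t"
        using t by simp
    qed
    moreover have "transpose i j permutes {0..<n}" by (rule permutes_swap_id) (use i j in auto)
    ultimately have "e \<in> sym_orbit n f" using orbit_mem[of "transpose i j" n f] by simp
    then show ?thesis using good_perm[OF lf _ gf[folded f_def]] e_def d_def by simp
  next
    case False
    then have big: "f ! j + 2 \<le> f ! i" using dij fi fj by simp
    have "e = map (\<lambda>t. f!t - (if t = i then 1 else 0) + (if t = j then 1 else 0)) [0..<n]"
    proof (rule nth_equalityI)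
      show "length e = length (map (\<lambda>t. f!t - (if t = i then 1 else 0) + (if t = j then 1 else 0)) [0..<n])"
        using le by simp
      fix t assume "t < length e"
      then have t: "t < n" using le by simp
      have "e ! t = f!t - (if t = i then 1 else 0) + (if t = j then 1 else 0)"
      proof (cases "t = i")
        case True
        then show ?thesis using ei fi ij by simp
      next
        case False
        note F1 = False
        show ?thesis
        proof (cases "t = j")
          case True
          then show ?thesis using ej fj ij by simp
        next
          case False
          then show ?thesis using F1 eo[OF t] by simp
        qed
      qed
      then show "e ! t = map (\<lambda>t. f!t - (if t = i then 1 else 0) + (if t = j then 1 else 0)) [0..<n] ! t"
        using t by simp
    qed
    then have "\<forall>e''\<in>sym_orbit n e. Minsym n (addS c {..<k} n) x + monomial_eval e'' x = Minsym n (addS c {..<k} n) x"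
      using good_transfer[OF ST lf i j ij big gf[folded f_def]] by blast
    then show ?thesis unfolding good_def e_def d_def by blast
  qed
qed



lemma top_unique:
  assumes c: "length c = n" and dc: "desc c" and k: "k \<le> n" and s: "\<sigma> permutes {0..<n}"
    and d: "d \<in> sym_orbit n c" and S: "S \<subseteq> {0..<n}" and cS: "card S = k"
    and e: "addS d S n = map (\<lambda>j. addS c {..<k} n ! inv \<sigma> j) [0..<n]"
  shows "S = \<sigma> ` {..<k}"
proof (cases "k = 0")
  case True
  have "finite S" using S finite_subset by blast
  then have "S = {}" using cS True by simp
  then show ?thesis using True by simp
next
  case False
  define c' where "c' = addS c {..<k} n"
  define E where "E = map (\<lambda>j. c' ! inv \<sigma> j) [0..<n]"
  have finS: "finite S" using S finite_subset by blast
  have ld: "length d = n" using orbit_length[OF d] .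
  have lc': "length c' = n" by (simp add: c'_def addS_def)
  have c'nth: "\<And>i. i < n \<Longrightarrow> c' ! i = c ! i + (if i < k then 1 else 0)" by (simp add: c'_def addS_def)
  have Enth: "\<And>j. j < n \<Longrightarrow> E ! j = d ! j + (if j \<in> S then 1 else 0)"
  proof -
    fix j assume j: "j < n"
    have "E ! j = addS d S n ! j" using e unfolding E_def c'_def by simp
    then show "E ! j = d ! j + (if j \<in> S then 1 else 0)" using j by (simp add: addS_def)
  qed
  have Eorb: "E \<in> sym_orbit n c'" unfolding E_def by (rule orbit_mem[OF s])
  have sq1: "(\<Sum>j<n. (d!j)^2) = (\<Sum>i<n. (c!i)^2)" using orbit_sum[OF c d] .
  have sq2: "(\<Sum>j<n. (E!j)^2) = (\<Sum>i<n. (c'!i)^2)" using orbit_sum[OF lc' Eorb] .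
  have sq3: "(\<Sum>j<n. (E!j)^2) = (\<Sum>j<n. (d!j)^2) + (\<Sum>j\<in>S. 2 * d!j + 1)"
  proof -
    have "(\<Sum>j<n. (E!j)^2) = (\<Sum>j<n. (d!j)^2 + (if j \<in> S then 2 * d!j + 1 else 0))"
      by (rule sum.cong) (auto simp: Enth power2_eq_square algebra_simps)
    also have "\<dots> = (\<Sum>j<n. (d!j)^2) + (\<Sum>j<n. if j \<in> S then 2 * d!j + 1 else 0)"
      by (rule sum.distrib)
    also have "(\<Sum>j<n. if j \<in> S then 2 * d!j + 1 else 0) = (\<Sum>j\<in>S. 2 * d!j + 1)"
    proof -
      have "S = {j \<in> {..<n}. j \<in> S}" using S by auto
      then show ?thesis using sum.inter_filter[of "{..<n}" "\<lambda>j. 2 * d!j + 1" "\<lambda>j. j \<in> S"] by simp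
    qed
    finally show ?thesis .
  qed
  have sq4: "(\<Sum>i<n. (c'!i)^2) = (\<Sum>i<n. (c!i)^2) + (\<Sum>i<k. 2 * c!i + 1)"
  proof -
    have "(\<Sum>i<n. (c'!i)^2) = (\<Sum>i<n. (c!i)^2 + (if i \<in> {..<k} then 2 * c!i + 1 else 0))"
      by (rule sum.cong) (auto simp: c'nth power2_eq_square algebra_simps)
    also have "\<dots> = (\<Sum>i<n. (c!i)^2) + (\<Sum>i<n. if i \<in> {..<k} then 2 * c!i + 1 else 0)"
      by (rule sum.distrib)
    also have "(\<Sum>i<n. if i \<in> {..<k} then 2 * c!i + 1 else 0) = (\<Sum>i<k. 2 * c!i + 1)"
    proof -
      have "{..<k} = {j \<in> {..<n}. j \<in> {..<k}}" using k by auto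
      then show ?thesis using sum.inter_filter[of "{..<n}" "\<lambda>j. 2 * c!j + 1" "\<lambda>j. j \<in> {..<k}"] by simp
    qed
    finally show ?thesis .
  qed
  have h1: "(\<Sum>j\<in>S. 2 * d!j + 1) = (\<Sum>i<k. 2 * c!i + 1)" using sq1 sq2 sq3 sq4 by simp
  have sumS: "(\<Sum>j\<in>S. E!j) = (\<Sum>i<k. c'!i)"
  proof -
    have a1: "(\<Sum>j\<in>S. E!j) = (\<Sum>j\<in>S. d!j + 1)" by (rule sum.cong) (use S Enth in auto)
    have a2: "(\<Sum>i<k. c'!i) = (\<Sum>i<k. c!i + 1)" by (rule sum.cong) (use k c'nth in auto)
    have "2 * (\<Sum>j\<in>S. d!j + 1) = (\<Sum>j\<in>S. (2 * d!j + 1) + 1)"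
      by (simp add: sum_distrib_left)
    also have "\<dots> = (\<Sum>j\<in>S. 2 * d!j + 1) + card S"
      by (simp only: sum.distrib card_eq_sum)
    finally have b1: "2 * (\<Sum>j\<in>S. d!j + 1) = (\<Sum>j\<in>S. 2 * d!j + 1) + card S" .
    have "2 * (\<Sum>i<k. c!i + 1) = (\<Sum>i<k. (2 * c!i + 1) + 1)"
      by (simp add: sum_distrib_left)
    also have "\<dots> = (\<Sum>i<k. 2 * c!i + 1) + card {..<k}"
      by (simp only: sum.distrib card_eq_sum)
    finally have b2: "2 * (\<Sum>i<k. c!i + 1) = (\<Sum>i<k. 2 * c!i + 1) + k" by simp
    show ?thesis using b1 b2 a1 a2 h1 cS by simp
  qed
  have sumT: "(\<Sum>j\<in>\<sigma> ` {..<k}. E!j) = (\<Sum>i<k. c'!i)"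
  proof -
    have "(\<Sum>j\<in>\<sigma> ` {..<k}. E!j) = (\<Sum>i<k. E ! (\<sigma> i))"
      using sum.reindex[OF permutes_inj_on[OF s], of "\<lambda>j. E!j" "{..<k}"] by simp
    also have "\<dots> = (\<Sum>i<k. c'!i)"
      by (rule sum.cong) (use k perm_lt[OF s] in \<open>auto simp: E_def permutes_inverses[OF s]\<close>)
    finally show ?thesis .
  qed
  have kk: "k - 1 < n" "k - 1 < k" using k False by auto
  show ?thesis
  proof (rule set_unique[where f = "\<lambda>j. E!j" and \<theta> = "c' ! (k - 1)"])
    show "finite S" by fact
    show "finite (\<sigma> ` {..<k})" by simp
    show "card S = card (\<sigma> ` {..<k})" using cS card_image[OF permutes_inj_on[OF s], of "{..<k}"] by simp
    show "(\<Sum>j\<in>\<sigma> ` {..<k}. E!j) \<le> (\<Sum>j\<in>S. E!j)" using sumS sumT by simp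
    show "\<forall>j\<in>\<sigma> ` {..<k}. c' ! (k - 1) \<le> E ! j"
    proof
      fix j assume "j \<in> \<sigma> ` {..<k}"
      then obtain i where i: "i < k" "j = \<sigma> i" by auto
      have "E ! j = c' ! i" using i k perm_lt[OF s] by (simp add: E_def permutes_inverses[OF s])
      moreover have "c ! (k - 1) \<le> c ! i" using dc i k unfolding desc_def c by (simp add: c)
      ultimately show "c' ! (k - 1) \<le> E ! j" using i k kk c'nth by simp
    qed
    show "\<forall>j\<in>S - \<sigma> ` {..<k}. E ! j < c' ! (k - 1)"
    proof
      fix j assume j: "j \<in> S - \<sigma> ` {..<k}"
      then have jn: "j < n" using S by auto
      have nk: "\<not> inv \<sigma> j < k"
      proof
        assume "inv \<sigma> j < k"
        then have "\<sigma> (inv \<sigma> j) \<in> \<sigma> ` {..<k}" by simp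
        then show False using j permutes_inverses[OF s] by simp
      qed
      have ij: "inv \<sigma> j < n" using inv_lt[OF s jn] .
      have "E ! j = c ! inv \<sigma> j" using jn ij nk c'nth by (simp add: E_def)
      moreover have "c ! inv \<sigma> j \<le> c ! (k - 1)" using dc nk ij kk unfolding desc_def c by simp
      ultimately show "E ! j < c' ! (k - 1)" using kk c'nth by simp
    qed
  qed
qed



lemma lemmaL:
  fixes x :: "nat \<Rightarrow> 'a::{comm_semiring_0, comm_monoid_mult}"
  assumes ST: "supertropical TYPE('a)"
    and c: "length c = n" and dc: "desc c" and k: "k \<le> n"
  shows "Minsym n c x * esym n k x = Minsym n (addS c {..<k} n) x"
proof -
  define Orb where "Orb = sym_orbit n c"
  define K where "K = {S. S \<subseteq> {0..<n} \<and> card S = k}"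
  define c' where "c' = addS c {..<k} n"
  define Orb' where "Orb' = sym_orbit n c'"
  define g where "g = (\<lambda>(d, S). addS d S n)"
  define P where "P = Orb \<times> K"
  define G where "G = {p \<in> P. g p \<in> Orb'}"
  have lc': "length c' = n" by (simp add: c'_def addS_def)
  have finO: "finite Orb" unfolding Orb_def by (rule orbit_finite)
  have finK: "finite K" unfolding K_def by (rule finite_subset[of _ "Pow {0..<n}"]) auto
  have finP: "finite P" unfolding P_def using finO finK by simp
  have h1: "Minsym n c x * esym n k x = (\<Sum>p\<in>P. monomial_eval (g p) x)"
  proof -
    have "Minsym n c x * esym n k x = (\<Sum>d\<in>Orb. monomial_eval d x) * (\<Sum>S\<in>K. \<Prod>i\<in>S. x i)"
      unfolding Minsym_def esym_def Orb_def K_def ..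
    also have "\<dots> = (\<Sum>d\<in>Orb. \<Sum>S\<in>K. monomial_eval d x * (\<Prod>i\<in>S. x i))"
      by (rule sum_product)
    also have "\<dots> = (\<Sum>(d, S)\<in>Orb \<times> K. monomial_eval d x * (\<Prod>i\<in>S. x i))"
      by (rule sum.cartesian_product)
    also have "\<dots> = (\<Sum>p\<in>P. monomial_eval (g p) x)"
      unfolding P_def
    proof (rule sum.cong)
      fix p assume "p \<in> Orb \<times> K"
      then obtain d S where p: "p = (d, S)" "d \<in> Orb" "S \<in> K" by auto
      have "length d = n" using p(2) orbit_length unfolding Orb_def by blast
      then show "(case p of (d, S) \<Rightarrow> monomial_eval d x * (\<Prod>i\<in>S. x i)) = monomial_eval (g p) x"
        using prod_addS[of d n S x] p(3) unfolding p(1) g_def K_def by simp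
    qed simp
    finally show ?thesis .
  qed
  have h2: "(\<Sum>p\<in>P. monomial_eval (g p) x)
      = (\<Sum>p\<in>P - G. monomial_eval (g p) x) + (\<Sum>p\<in>G. monomial_eval (g p) x)"
    using sum.subset_diff[of G P] finP unfolding G_def by auto
  have bij: "bij_betw g G Orb'"
  proof (rule bij_betw_imageI)
    show "inj_on g G"
    proof (rule inj_onI)
      fix p1 p2 assume p1: "p1 \<in> G" and p2: "p2 \<in> G" and eq: "g p1 = g p2"
      obtain d1 S1 where q1: "p1 = (d1, S1)" by (cases p1)
      obtain d2 S2 where q2: "p2 = (d2, S2)" by (cases p2)
      have m1: "d1 \<in> Orb" "S1 \<in> K" "g p1 \<in> Orb'" using p1 q1 unfolding G_def P_def by auto
      have m2: "d2 \<in> Orb" "S2 \<in> K" "g p2 \<in> Orb'" using p2 q2 unfolding G_def P_def by auto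
      obtain \<sigma> where s: "\<sigma> permutes {0..<n}" and ge: "g p1 = map (\<lambda>j. c' ! inv \<sigma> j) [0..<n]"
        using m1(3) unfolding Orb'_def by (rule orbit_elim)
      have S1: "S1 = \<sigma> ` {..<k}"
        using top_unique[OF c dc k s, of d1 S1] m1 ge q1 unfolding Orb_def K_def g_def c'_def by simp
      have S2: "S2 = \<sigma> ` {..<k}"
        using top_unique[OF c dc k s, of d2 S2] m2 ge eq q2 unfolding Orb_def K_def g_def c'_def by simp
      have l1: "length d1 = n" and l2: "length d2 = n"
        using m1 m2 orbit_length unfolding Orb_def by blast+
      have "d1 = d2"
      proof (rule nth_equalityI)
        show "length d1 = length d2" using l1 l2 by simp
        fix j assume "j < length d1"
        then have j: "j < n" using l1 by simp
        have "addS d1 S1 n ! j = addS d2 S2 n ! j" using eq q1 q2 unfolding g_def by simp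
        then show "d1 ! j = d2 ! j" using j S1 S2 by (simp add: addS_def)
      qed
      then show "p1 = p2" using q1 q2 S1 S2 by simp
    qed
    show "g ` G = Orb'"
    proof
      show "g ` G \<subseteq> Orb'" unfolding G_def by auto
      show "Orb' \<subseteq> g ` G"
      proof
        fix e assume "e \<in> Orb'"
        then obtain \<sigma> where s: "\<sigma> permutes {0..<n}" and ee: "e = map (\<lambda>j. c' ! inv \<sigma> j) [0..<n]"
          unfolding Orb'_def by (rule orbit_elim)
        define p where "p = (map (\<lambda>j. c ! inv \<sigma> j) [0..<n], \<sigma> ` {..<k})"
        have gp: "g p = e" unfolding p_def g_def ee c'_def using addS_top[OF c k s] by simp
        have "map (\<lambda>j. c ! inv \<sigma> j) [0..<n] \<in> Orb" unfolding Orb_def by (rule orbit_mem[OF s])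
        moreover have "\<sigma> ` {..<k} \<in> K"
          unfolding K_def using perm_lt[OF s] k card_image[OF permutes_inj_on[OF s], of "{..<k}"] by auto
        ultimately have "p \<in> P" unfolding P_def p_def by simp
        then have "p \<in> G" using gp \<open>e \<in> Orb'\<close> unfolding G_def by simp
        then show "e \<in> g ` G" using gp by blast
      qed
    qed
  qed
  have h3: "(\<Sum>p\<in>G. monomial_eval (g p) x) = Minsym n c' x"
    unfolding Minsym_def Orb'_def[symmetric] using sum.reindex_bij_betw[OF bij] .
  have h4: "Minsym n c' x + (\<Sum>p\<in>P - G. monomial_eval (g p) x) = Minsym n c' x"
  proof (rule absorb_sum)
    show "finite (P - G)" using finP by simp
    show "\<forall>p\<in>P - G. Minsym n c' x + monomial_eval (g p) x = Minsym n c' x"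
    proof
      fix p assume pPG: "p \<in> P - G"
      obtain d S where q: "p = (d, S)" by (cases p)
      have dO: "d \<in> Orb" and SK: "S \<in> K" and nG: "g p \<notin> Orb'" using pPG q unfolding P_def G_def by auto
      obtain \<sigma> where s: "\<sigma> permutes {0..<n}" and dd: "d = map (\<lambda>j. c ! inv \<sigma> j) [0..<n]"
        using dO unfolding Orb_def by (rule orbit_elim)
      have gd: "good n c' x (g p)"
        using good_all[OF ST c dc k s, of S x] SK unfolding K_def c'_def g_def q dd by simp
      have lg: "length (g p) = n" by (simp add: g_def q addS_def)
      have self: "g p \<in> sym_orbit n (g p)" using orbit_self[OF lg] .
      have "sym_orbit n (g p) \<noteq> sym_orbit n c'" using self nG unfolding Orb'_def by auto
      then have "\<forall>e''\<in>sym_orbit n (g p). Minsym n c' x + monomial_eval e'' x = Minsym n c' x"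
        using gd unfolding good_def by blast
      then show "Minsym n c' x + monomial_eval (g p) x = Minsym n c' x" using self by blast
    qed
  qed
  show ?thesis using h1 h2 h3 h4 unfolding c'_def[symmetric] by (simp add: add.commute)
qed



lemma main_desc:
  fixes ty :: "'a::{comm_semiring_0, comm_monoid_mult} itself"
  assumes ST: "supertropical TYPE('a)"
  shows "desc c \<Longrightarrow> length c = n \<Longrightarrow> \<exists>ks. set ks \<subseteq> {1..n} \<and>
           (\<forall>x :: nat \<Rightarrow> 'a. Minsym n c x = (\<Prod>k\<leftarrow>ks. esym n k x))"
proof (induction "sum_list c" arbitrary: c rule: less_induct)
  case less
  note dc = less.prems(1) and c = less.prems(2)
  show ?case
  proof (cases "\<forall>i<n. c ! i = 0")
    case True
    have orb: "sym_orbit n c = {c}"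
    proof
      show "sym_orbit n c \<subseteq> {c}"
      proof
        fix e assume "e \<in> sym_orbit n c"
        then obtain \<sigma> where s: "\<sigma> permutes {0..<n}" and ee: "e = map (\<lambda>j. c ! inv \<sigma> j) [0..<n]"
          by (rule orbit_elim)
        have "e = c"
        proof (rule nth_equalityI)
          show "length e = length c" using ee c by simp
          fix j assume "j < length e"
          then have j: "j < n" using ee by simp
          then show "e ! j = c ! j" using True inv_lt[OF s j] ee by simp
        qed
        then show "e \<in> {c}" by simp
      qed
      show "{c} \<subseteq> sym_orbit n c" using orbit_self[OF c] by simp
    qed
    have "\<forall>x :: nat \<Rightarrow> 'a. Minsym n c x = 1"
      unfolding Minsym_def orb monomial_eval_def using True c by simp
    then show ?thesis by (intro exI[of _ "[]"]) simp
  next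
    case False
    then obtain i0 where i0: "i0 < n" "c ! i0 \<noteq> 0" by blast
    define k where "k = length (takeWhile (\<lambda>v. 0 < v) c)"
    have kn: "k \<le> n" unfolding k_def using c length_takeWhile_le by metis
    have pos: "\<And>i. i < k \<Longrightarrow> 0 < c ! i"
    proof -
      fix i assume "i < k"
      then have "takeWhile (\<lambda>v. 0 < v) c ! i = c ! i" unfolding k_def by (rule takeWhile_nth)
      moreover have "takeWhile (\<lambda>v. 0 < v) c ! i \<in> set (takeWhile (\<lambda>v. 0 < v) c)"
        using \<open>i < k\<close> unfolding k_def by simp
      ultimately show "0 < c ! i" using set_takeWhileD by fastforce
    qed
    have zero: "\<And>i. k \<le> i \<Longrightarrow> i < n \<Longrightarrow> c ! i = 0"
    proof -
      fix i assume ki: "k \<le> i" and i: "i < n"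
      then have "k < length c" using c by simp
      then have "\<not> 0 < c ! k" unfolding k_def by (rule nth_length_takeWhile)
      moreover have "c ! i \<le> c ! k" using dc ki i c unfolding desc_def by simp
      ultimately show "c ! i = 0" by simp
    qed
    have k0: "0 < k"
    proof (rule ccontr)
      assume "\<not> 0 < k"
      then have "c ! i0 = 0" using zero i0 by simp
      then show False using i0 by simp
    qed
    define c0 where "c0 = map (\<lambda>i. c ! i - (if i < k then 1 else 0)) [0..<n]"
    have lc0: "length c0 = n" by (simp add: c0_def)
    have dc0: "desc c0" unfolding desc_def
    proof (intro allI impI)
      fix i j assume ij: "i \<le> j" and j: "j < length c0"
      then have jn: "j < n" using lc0 by simp
      have "c ! j \<le> c ! i" using dc ij jn c unfolding desc_def by simp
      then show "c0 ! j \<le> c0 ! i" using ij jn zero[of j] by (auto simp: c0_def)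
    qed
    have cc: "c = addS c0 {..<k} n"
    proof (rule nth_equalityI)
      show "length c = length (addS c0 {..<k} n)" using c by (simp add: addS_def)
      fix i assume "i < length c"
      then have i: "i < n" using c by simp
      show "c ! i = addS c0 {..<k} n ! i" using i pos[of i] by (simp add: addS_def c0_def)
    qed
    have "sum_list c0 < sum_list c"
    proof -
      have "sum_list c0 = (\<Sum>i\<in>{0..<n}. c0 ! i)" using lc0 by (simp add: sum_list_sum_nth)
      also have "\<dots> < (\<Sum>i\<in>{0..<n}. c ! i)"
      proof (rule sum_strict_mono_ex1)
        show "finite {0..<n}" by simp
        show "\<forall>i\<in>{0..<n}. c0 ! i \<le> c ! i" by (auto simp: c0_def)
        show "\<exists>i\<in>{0..<n}. c0 ! i < c ! i"
          using k0 kn pos[of 0] by (intro bexI[of _ 0]) (auto simp: c0_def)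
      qed
      also have "\<dots> = sum_list c" using c by (simp add: sum_list_sum_nth)
      finally show ?thesis .
    qed
    then obtain ks where ks: "set ks \<subseteq> {1..n}" "\<forall>x :: nat \<Rightarrow> 'a. Minsym n c0 x = (\<Prod>k\<leftarrow>ks. esym n k x)"
      using less.hyps dc0 lc0 by blast
    have "\<forall>x :: nat \<Rightarrow> 'a. Minsym n c x = (\<Prod>k\<leftarrow>k # ks. esym n k x)"
    proof
      fix x :: "nat \<Rightarrow> 'a"
      have "Minsym n c x = Minsym n c0 x * esym n k x"
        using lemmaL[OF ST lc0 dc0 kn, of x] cc by simp
      then show "Minsym n c x = (\<Prod>k\<leftarrow>k # ks. esym n k x)" using ks(2) by (simp add: mult.commute)
    qed
    moreover have "set (k # ks) \<subseteq> {1..n}" using ks k0 kn by auto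
    ultimately show ?thesis by blast
  qed
qed

theorem lemma5p8:
  fixes n :: nat and c :: "nat list"
  assumes "supertropical TYPE('a::{comm_semiring_0, comm_monoid_mult})"
    and "length c = n"
  shows "\<exists>ks. set ks \<subseteq> {1..n} \<and>
           (\<forall>x :: nat \<Rightarrow> 'a. Minsym n c x = (\<Prod>k\<leftarrow>ks. esym n k x))"
proof -
  define cs where "cs = rev (sort c)"
  have lcs: "length cs = n" using assms(2) by (simp add: cs_def)
  have dcs: "desc cs" unfolding desc_def
  proof (intro allI impI)
    fix i j assume ij: "i \<le> j" and j: "j < length cs"
    have s: "sorted (sort c)" by simp
    have "cs ! j = sort c ! (length c - Suc j)" "cs ! i = sort c ! (length c - Suc i)"
      using ij j by (auto simp: cs_def rev_nth)
    moreover have "sort c ! (length c - Suc j) \<le> sort c ! (length c - Suc i)"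
      using sorted_nth_mono[OF s] ij j by (simp add: cs_def)
    ultimately show "cs ! j \<le> cs ! i" by simp
  qed
  have "mset c = mset cs" by (simp add: cs_def)
  then obtain p where p: "p permutes {..<length cs}" "permute_list p cs = c"
    by (rule mset_eq_permutation)
  have p': "p permutes {0..<n}" using p(1) lcs by (simp add: atLeast0LessThan)
  have "c = map (\<lambda>j. cs ! inv (inv p) j) [0..<n]"
    using p(2) lcs permutes_inv_inv[OF p'] by (simp add: permute_list_def)
  then have "c \<in> sym_orbit n cs" using orbit_mem[OF permutes_inv[OF p'], of cs] by simp
  then have eqo: "sym_orbit n c = sym_orbit n cs" using orbit_eq[OF lcs] by simp
  obtain ks where ks: "set ks \<subseteq> {1..n}" "\<forall>x :: nat \<Rightarrow> 'a. Minsym n cs x = (\<Prod>k\<leftarrow>ks. esym n k x)"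
    using main_desc[OF assms(1) dcs lcs] by blast
  show ?thesis using ks eqo unfolding Minsym_def by auto
qed

end
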